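(* Let $W=\mathrm{diag}(w_1,w_2,\dots)$ with $w_n\ge0$ for all $n$ be a diagonal operator such that $-\Delta_1\ge W$ in the sense of quadratic forms, i.e. $\sum_{n=1}^\infty w_n|\psi_n|^2\le\sum_{n=1}^\infty|\psi_{n+1}-\psi_n|^2$ for all $\psi\in\ell^2(\mathbb{N})$. Then $W=0$.
   Context: $\mathbb{N}=\{1,2,\dots\}$. The discrete Neumann Laplacian is $-\Delta_1:=2-J_1$ on $\ell^2(\mathbb{N})$, where $(J_1\psi)_1=\psi_1+\psi_2$ and $(J_1\psi)_n=\psi_{n-1}+\psi_{n+1}$ for $n\ge2$; its quadratic form is $\langle\psi,-\Delta_1\psi\rangle=\sum_{n\ge1}|\psi_{n+1}-\psi_n|^2$. *)

theory Defs
  imports "HOL-Analysis.Analysis"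
begin

end

theory Submission
  imports Defs
begin

definition tent :: "nat \<Rightarrow> nat \<Rightarrow> real" where
  "tent N k = (if k \<le> N then 1 else if k \<le> 2*N then 2 - real k / real N else 0)"

lemma tent_diff:
  assumes "N \<ge> 1"
  shows "(tent N (Suc (Suc n)) - tent N (Suc n))\<^sup>2 =
     (if n \<in> {N-1..<2*N-1} then 1 / (real N)\<^sup>2 else 0)"
proof -
  have Np: "real N > 0" using assms by simp
  consider "Suc (Suc n) \<le> N" | "N \<le> Suc n \<and> Suc (Suc n) \<le> 2*N" | "2*N \<le> Suc n" by linarith
  then show ?thesis
  proof cases
    case 1 then show ?thesis by (auto simp: tent_def)
  next
    case 2
    have a: "tent N (Suc n) = 2 - real (Suc n) / real N"
    proof (cases "Suc n = N")
      case True then show ?thesis using Np by (simp add: tent_def)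
    next
      case False then show ?thesis using 2 by (simp add: tent_def)
    qed
    have b: "tent N (Suc (Suc n)) = 2 - real (Suc (Suc n)) / real N"
      using 2 by (simp add: tent_def)
    have "(tent N (Suc (Suc n)) - tent N (Suc n)) = - 1 / real N"
      unfolding a b using Np by (simp add: field_simps)
    moreover have "n \<in> {N-1..<2*N-1}" using 2 by auto
    ultimately show ?thesis by (simp add: power2_eq_square)
  next
    case 3 then show ?thesis by (auto simp: tent_def)
  qed
qed

theorem theorem4p2:
  fixes w :: "nat \<Rightarrow> real"
  assumes nonneg: "\<forall>n\<ge>1. w n \<ge> 0"
    and hardy: "\<forall>\<psi> :: nat \<Rightarrow> complex.
        summable (\<lambda>n. (cmod (\<psi> (Suc n)))\<^sup>2) \<longrightarrow>
        (\<Sum>n. ennreal (w (Suc n) * (cmod (\<psi> (Suc n)))\<^sup>2))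
          \<le> (\<Sum>n. ennreal ((cmod (\<psi> (Suc (Suc n)) - \<psi> (Suc n)))\<^sup>2))"
  shows "\<forall>n\<ge>1. w n = 0"
proof (intro allI impI)
  fix m :: nat assume m: "m \<ge> 1"
  show "w m = 0"
  proof (rule ccontr)
    assume "w m \<noteq> 0"
    with nonneg m have wp: "w m > 0" by auto
    obtain K :: nat where K: "real K > 1 / w m" using reals_Archimedean2 by blast
    define N where "N = max K m"
    have N1: "N \<ge> 1" and Nm: "m \<le> N" using m by (auto simp: N_def)
    have NK: "1 / real N < w m"
    proof -
      have "1 / w m < real N" using K by (simp add: N_def)
      then show ?thesis using wp N1 by (simp add: field_simps)
    qed
    define \<psi> where "\<psi> = (\<lambda>k. complex_of_real (tent N k))"
    have fin: "(\<lambda>n. (cmod (\<psi> (Suc n)))\<^sup>2) sums (\<Sum>n\<in>{..<2*N}. (cmod (\<psi> (Suc n)))\<^sup>2)"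
      by (rule sums_finite) (auto simp: \<psi>_def tent_def)
    note H = hardy[rule_format, OF sums_summable[OF fin]]
    have rhs_sums: "(\<lambda>n. (cmod (\<psi> (Suc (Suc n)) - \<psi> (Suc n)))\<^sup>2) sums (1 / real N)"
    proof -
      have eq: "(\<lambda>n. (cmod (\<psi> (Suc (Suc n)) - \<psi> (Suc n)))\<^sup>2) =
          (\<lambda>n. if n \<in> {N-1..<2*N-1} then 1 / (real N)\<^sup>2 else 0)"
      proof
        fix n
        have "cmod (\<psi> (Suc (Suc n)) - \<psi> (Suc n)) = \<bar>tent N (Suc (Suc n)) - tent N (Suc n)\<bar>"
          unfolding \<psi>_def by (metis norm_of_real of_real_diff)
        then show "(cmod (\<psi> (Suc (Suc n)) - \<psi> (Suc n)))\<^sup>2 =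
          (if n \<in> {N-1..<2*N-1} then 1 / (real N)\<^sup>2 else 0)"
          using tent_diff[OF N1, of n] by simp
      qed
      have "(\<lambda>n. if n \<in> {N-1..<2*N-1} then 1 / (real N)\<^sup>2 else (0::real)) sums
            (\<Sum>n\<in>{N-1..<2*N-1}. if n \<in> {N-1..<2*N-1} then 1 / (real N)\<^sup>2 else 0)"
        by (rule sums_finite) auto
      moreover have "(\<Sum>n\<in>{N-1..<2*N-1}. if n \<in> {N-1..<2*N-1} then 1 / (real N)\<^sup>2 else (0::real))
          = 1 / real N"
      proof -
        have "card {N-1..<2*N-1} = N" using N1 by simp
        then show ?thesis using N1 by (simp add: power2_eq_square)
      qed
      ultimately show ?thesis unfolding eq by simp
    qed
    have rhs: "(\<Sum>n. ennreal ((cmod (\<psi> (Suc (Suc n)) - \<psi> (Suc n)))\<^sup>2)) = ennreal (1 / real N)"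
      by (rule suminf_ennreal_eq[OF _ rhs_sums]) simp
    have lhs: "ennreal (w m) \<le> (\<Sum>n. ennreal (w (Suc n) * (cmod (\<psi> (Suc n)))\<^sup>2))"
    proof -
      have "Suc (m-1) = m" using m by simp
      moreover have "tent N m = 1" using Nm by (simp add: tent_def)
      ultimately have "ennreal (w m) = ennreal (w (Suc (m-1)) * (cmod (\<psi> (Suc (m-1))))\<^sup>2)"
        by (simp add: \<psi>_def)
      also have "\<dots> \<le> (\<Sum>n. ennreal (w (Suc n) * (cmod (\<psi> (Suc n)))\<^sup>2))"
        using sum_le_suminf[of "\<lambda>n. ennreal (w (Suc n) * (cmod (\<psi> (Suc n)))\<^sup>2)" "{m-1}"] by simp
      finally show ?thesis .
    qed
    have "ennreal (w m) \<le> ennreal (1 / real N)" using order_trans[OF lhs H] rhs by simp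
    then have "w m \<le> 1 / real N" using N1 by (simp add: ennreal_le_iff)
    then show False using NK by simp
  qed
qed

end
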